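(* Let $q$ be a prime power and let $V\subseteq GF(q)^n$ be a linear subspace. Then $$\sum_{k=0}^n\frac{|\mathcal{A}_k(V)|}{(q-1)^k\binom{n}{k}}=\frac{(n+1)(q-1)}{q^{1+n-\dim V}}\sum_{k=0}^n\frac{|\mathcal{A}_k(V^\perp)|}{k+1}\left(1-\frac{(-1)^{k+1}}{(q-1)^{k+1}}\right).$$
   Context: The weight ${\rm wt}(x)$ of $x\in GF(q)^n$ is the number of its nonzero coordinates. For $W\subseteq GF(q)^n$, $\mathcal{A}_i(W)=\{x\in W:{\rm wt}(x)=i\}$. $V^\perp=\{u\in GF(q)^n:(u,v)=0\text{ for all }v\in V\}$ with the standard bilinear form $(u,v)=\sum_i u_iv_i$. *)

theory Defs
  imports "HOL-Analysis.Analysis"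
begin

text \<open>Vectors of GF(q)^n are modelled as 'a ^ 'n with 'a a finite field (q = CARD('a))
  and n = CARD('n).\<close>

definition wt :: "'a::zero ^ 'n \<Rightarrow> nat" where
  "wt x = card {i. x $ i \<noteq> 0}"

definition weight_class :: "nat \<Rightarrow> ('a::zero ^ 'n) set \<Rightarrow> ('a ^ 'n) set" ("\<A>") where
  "\<A> i W = {x \<in> W. wt x = i}"

definition bil :: "'a::comm_semiring_1 ^ 'n \<Rightarrow> 'a ^ 'n \<Rightarrow> 'a" where
  "bil u v = (\<Sum>i\<in>UNIV. u $ i * v $ i)"

definition perp :: "('a::comm_semiring_1 ^ 'n) set \<Rightarrow> ('a ^ 'n) set" where
  "perp V = {u. \<forall>v\<in>V. bil u v = 0}"

end

theory Submission
  imports Defs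
begin

definition supp :: "'a::zero ^ 'n \<Rightarrow> 'n set" where "supp x = {i. x $ i \<noteq> 0}"
definition EE :: "'n set \<Rightarrow> ('a::zero ^ 'n) set" where "EE R = {x. \<forall>i. i \<notin> R \<longrightarrow> x $ i = 0}"

lemma bil_sym: "bil u v = bil v u"
  unfolding bil_def by (simp add: mult.commute)

lemma bil_add: "bil (x + z) y = bil x y + bil z y"
  unfolding bil_def by (simp add: algebra_simps sum.distrib)

lemma bil_scale: "bil (c *s x) y = c * bil x y"
  unfolding bil_def by (simp add: algebra_simps sum_distrib_left)

lemma bil_add2: "bil y (x + z) = bil y x + bil y z"
  unfolding bil_def by (simp add: algebra_simps sum.distrib)

lemma bil_scale2: "bil y (c *s x) = c * bil y x"
  unfolding bil_def by (simp add: algebra_simps sum_distrib_left)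

lemma bil_diff: "bil (x - z) (y::'a::comm_ring_1^'n) = bil x y - bil z y"
  unfolding bil_def by (simp add: algebra_simps sum_subtractf)

lemma card_fiber:
  fixes V :: "'b::ab_group_add set" and f :: "'b \<Rightarrow> 'c::ab_group_add"
  assumes fin: "finite V"
    and cl_add: "\<And>x y. x \<in> V \<Longrightarrow> y \<in> V \<Longrightarrow> x + y \<in> V"
    and cl_diff: "\<And>x y. x \<in> V \<Longrightarrow> y \<in> V \<Longrightarrow> x - y \<in> V"
    and hom: "\<And>x y. x \<in> V \<Longrightarrow> y \<in> V \<Longrightarrow> f (x - y) = f x - f y"
  shows "card V = card {x\<in>V. f x = 0} * card (f ` V)"
proof -
  have hadd: "f (x + y) = f x + f y" if "x \<in> V" "y \<in> V" for x y
    using hom[of "x + y" y] cl_add[OF that] that by simp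
  have "card V = (\<Sum>x\<in>V. (1::nat))" by simp
  also have "\<dots> = (\<Sum>c\<in>f ` V. \<Sum>x\<in>{x\<in>V. f x = c}. 1)"
    by (rule sum.group[symmetric]) (use fin in auto)
  also have "\<dots> = (\<Sum>c\<in>f ` V. card {x\<in>V. f x = 0})"
  proof (rule sum.cong[OF refl])
    fix c assume "c \<in> f ` V"
    then obtain x0 where x0: "x0 \<in> V" "f x0 = c" by auto
    have "bij_betw (\<lambda>x. x - x0) {x\<in>V. f x = c} {x\<in>V. f x = 0}"
    proof (rule bij_betwI[where g="\<lambda>k. k + x0"])
      show "(\<lambda>x. x - x0) \<in> {x \<in> V. f x = c} \<rightarrow> {x \<in> V. f x = 0}"
        using cl_diff hom x0 by auto
      show "(\<lambda>k. k + x0) \<in> {x \<in> V. f x = 0} \<rightarrow> {x \<in> V. f x = c}"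
        using cl_add hadd x0 by auto
    qed auto
    then show "(\<Sum>x\<in>{x\<in>V. f x = c}. 1) = card {x\<in>V. f x = 0}"
      by (simp add: bij_betw_same_card)
  qed
  also have "\<dots> = card {x\<in>V. f x = 0} * card (f ` V)" by simp
  finally show ?thesis .
qed

lemma card_functional:
  fixes V :: "('a::{field,finite} ^ 'n) set" and f :: "'a ^ 'n \<Rightarrow> 'a"
  assumes sub: "vec.subspace V"
    and add: "\<And>x y. f (x + y) = f x + f y"
    and scl: "\<And>c x. f (c *s x) = c * f x"
    and x0: "w \<in> V" "f w \<noteq> 0"
  shows "card V = CARD('a) * card {x\<in>V. f x = 0}"
proof -
  have hom: "f (x - y) = f x - f y" for x y
    using add[of "x - y" y] by simp
  have img: "f ` V = UNIV"
  proof -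
    have "c \<in> f ` V" for c
    proof
      show "c = f ((c / f w) *s w)" using scl x0 by simp
      show "(c / f w) *s w \<in> V" using sub x0 vec.subspace_scale by blast
    qed
    then show ?thesis by auto
  qed
  have "card V = card {x\<in>V. f x = 0} * card (f ` V)"
    by (rule card_fiber) (auto intro: vec.subspace_add vec.subspace_diff sub hom)
  then show ?thesis using img by simp
qed


lemma subspace_EE: "vec.subspace (EE R :: ('a::field ^ 'n) set)"
  unfolding vec.subspace_def EE_def by auto

lemma card_EE: "card (EE R :: ('a::{field,finite} ^ 'n) set) = CARD('a) ^ card R"
proof -
  have "bij_betw (\<lambda>x. restrict (\<lambda>i. x $ i) R) (EE R :: ('a ^ 'n) set) (PiE R (\<lambda>_. UNIV))"
  proof (rule bij_betwI[where g="\<lambda>f. \<chi> i. if i \<in> R then f i else 0"])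
    show "(\<lambda>x. restrict (($) x) R) \<in> EE R \<rightarrow> R \<rightarrow>\<^sub>E UNIV" by auto
    show "(\<lambda>f. \<chi> i. if i \<in> R then f i else 0) \<in> (R \<rightarrow>\<^sub>E UNIV) \<rightarrow> (EE R :: ('a ^ 'n) set)"
      by (auto simp: EE_def)
    show "(\<chi> i. if i \<in> R then restrict (($) x) R i else 0) = x" if "x \<in> EE R" for x :: "'a ^ 'n"
      using that by (auto simp: EE_def vec_eq_iff)
    show "restrict (($) (\<chi> i. if i \<in> R then y i else (0 :: 'a))) R = y" if "y \<in> R \<rightarrow>\<^sub>E UNIV" for y
      using that by (auto simp: restrict_def PiE_def extensional_def fun_eq_iff)
  qed
  then have "card (EE R :: ('a ^ 'n) set) = card (PiE R (\<lambda>_. UNIV :: 'a set))"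
    by (rule bij_betw_same_card)
  also have "\<dots> = CARD('a) ^ card R"
    by (simp add: card_PiE)
  finally show ?thesis .
qed

lemma card_dim:
  fixes V :: "('a::{field,finite} ^ 'n) set"
  assumes "vec.subspace V"
  shows "card V = CARD('a) ^ vec.dim V"
proof -
  have "vec.dim V \<le> card (UNIV :: 'n set)" by (rule dim_subset_UNIV_cart_gen)
  then obtain D :: "'n set" where D: "card D = vec.dim V"
    using obtain_subset_with_card_n by metis
  have "vec.dim (EE D :: ('a ^ 'n) set) = card D"
    unfolding EE_def by (rule dim_substandard_cart)
  then obtain f where f: "Vector_Spaces.linear (*s) (*s) f" "f ` V = (EE D :: ('a ^ 'n) set)" "inj_on f V"
    using vec.subspace_isomorphism[OF assms subspace_EE] D by metis
  have "card V = card (EE D :: ('a ^ 'n) set)"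
    using f card_image by metis
  then show ?thesis using card_EE D by metis
qed

lemma card_field_gt1: "CARD('a::{field,finite}) > 1"
proof -
  have "card {0::'a, 1} \<le> CARD('a)" by (rule card_mono) auto
  then show ?thesis by simp
qed

lemma alg_aux: "(q::real) * N + (u - 1) * N = q * (w * u) + (N - w) * u \<Longrightarrow> (N - w * u) * (q - 1) = 0"
  by (simp add: algebra_simps)

lemma card_core:
  fixes U :: "('a::{field,finite} ^ 'n) set"
  assumes sub: "vec.subspace U" and UR: "U \<subseteq> EE R"
  shows "card U * card {y\<in>EE R. \<forall>x\<in>U. bil x y = 0} = CARD('a) ^ card R"
proof -
  define W where "W = {y\<in>EE R. \<forall>x\<in>U. bil x y = 0}"
  define q where "q = real CARD('a)"
  define N where "N = real (CARD('a) ^ card R)"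
  have q1: "q > 1" unfolding q_def using card_field_gt1[where 'a='a] by simp
  have finW: "finite W" by simp
  have WE: "W \<subseteq> EE R" unfolding W_def by auto
  have cardE: "real (card (EE R :: ('a ^ 'n) set)) = N" unfolding N_def by (simp add: card_EE)
  have s1: "(\<Sum>x\<in>U. real (card {y\<in>EE R. bil x y = 0})) = (\<Sum>y\<in>EE R. real (card {x\<in>U. bil x y = 0}))"
  proof -
    have "(\<Sum>x\<in>U. real (card {y\<in>EE R. bil x y = 0})) = (\<Sum>x\<in>U. \<Sum>y\<in>EE R. if bil x y = 0 then 1 else 0)"
      by (simp add: sum.If_cases Int_def conj_commute)
    also have "\<dots> = (\<Sum>y\<in>EE R. \<Sum>x\<in>U. if bil x y = 0 then 1 else 0)"
      by (rule sum.swap)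
    also have "\<dots> = (\<Sum>y\<in>EE R. real (card {x\<in>U. bil x y = 0}))"
      by (simp add: sum.If_cases Int_def conj_commute)
    finally show ?thesis .
  qed
  have lhs: "(\<Sum>x\<in>U. real (card {y\<in>EE R. bil x y = 0})) = N + (real (card U) - 1) * N / q"
  proof -
    have 0: "0 \<in> U" using sub vec.subspace_0 by blast
    have z: "card {y\<in>EE R. bil 0 y = (0::'a)} = card (EE R :: ('a ^ 'n) set)"
      by (simp add: bil_def)
    have nz: "real (card {y\<in>EE R. bil x y = 0}) = N / q" if "x \<in> U - {0}" for x
    proof -
      from that UR obtain i where i: "i \<in> R" "x $ i \<noteq> 0"
        by (auto simp: EE_def vec_eq_iff)
      have "card (EE R :: ('a ^ 'n) set) = CARD('a) * card {y\<in>EE R. bil x y = 0}"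
      proof (rule card_functional[OF subspace_EE, where w="axis i 1"])
        show "axis i 1 \<in> EE R" using i by (auto simp: EE_def axis_def)
        show "bil x (axis i 1) \<noteq> 0" using i
          by (simp add: bil_def axis_def if_distrib cong: if_cong)
      qed (auto simp: bil_add2 bil_scale2)
      then show ?thesis using cardE q1 unfolding q_def
        by (metis (mono_tags, lifting) nonzero_mult_div_cancel_left not_one_less_zero of_nat_mult order_less_irrefl of_nat_0)
    qed
    have "(\<Sum>x\<in>U. real (card {y\<in>EE R. bil x y = 0})) =
        real (card {y\<in>EE R. bil 0 y = (0::'a)}) + (\<Sum>x\<in>U - {0}. real (card {y\<in>EE R. bil x y = 0}))"
      using 0 by (simp add: sum.remove)
    also have "\<dots> = N + (\<Sum>x\<in>U - {0}. N / q)"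
      using z cardE nz by simp
    also have "\<dots> = N + (real (card U) - 1) * N / q"
    proof -
      have "card U \<ge> 1" using 0 by (auto simp: Suc_le_eq card_gt_0_iff)
      then show ?thesis using 0 by (simp add: card_Diff_singleton of_nat_diff)
    qed
    finally show ?thesis .
  qed
  have rhs: "(\<Sum>y\<in>EE R. real (card {x\<in>U. bil x y = 0})) = real (card W) * card U + (N - card W) * card U / q"
  proof -
    have a: "real (card {x\<in>U. bil x y = 0}) = card U" if "y \<in> W" for y
      using that unfolding W_def by (auto intro: arg_cong[where f=card])
    have b: "real (card {x\<in>U. bil x y = 0}) = card U / q" if "y \<in> EE R - W" for y
    proof -
      from that obtain x0 where x0: "x0 \<in> U" "bil x0 y \<noteq> 0" unfolding W_def by auto
      have "card U = CARD('a) * card {x\<in>U. bil x y = 0}"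
        by (rule card_functional[OF sub, where f="\<lambda>x. bil x y", OF _ _ x0]) (auto simp: bil_add bil_scale)
      then show ?thesis using q1 unfolding q_def by simp
    qed
    have "(\<Sum>y\<in>EE R. real (card {x\<in>U. bil x y = 0})) =
        (\<Sum>y\<in>W. real (card {x\<in>U. bil x y = 0})) + (\<Sum>y\<in>EE R - W. real (card {x\<in>U. bil x y = 0}))"
      by (subst sum.subset_diff[OF WE]) (simp_all add: add.commute)
    also have "\<dots> = (\<Sum>y\<in>W. real (card U)) + (\<Sum>y\<in>EE R - W. card U / q)"
    proof -
      have "(\<Sum>y\<in>W. real (card {x\<in>U. bil x y = 0})) = (\<Sum>y\<in>W. real (card U))"
        by (rule sum.cong[OF refl]) (rule a)
      moreover have "(\<Sum>y\<in>EE R - W. real (card {x\<in>U. bil x y = 0})) = (\<Sum>y\<in>EE R - W. card U / q)"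
        by (rule sum.cong[OF refl]) (rule b)
      ultimately show ?thesis by simp
    qed
    also have "\<dots> = real (card W) * card U + (N - card W) * card U / q"
    proof -
      have "card W \<le> card (EE R :: ('a ^ 'n) set)" by (rule card_mono[OF _ WE]) simp
      then have "real (card (EE R - W)) = N - card W"
        using cardE by (simp add: card_Diff_subset[OF _ WE] of_nat_diff)
      then show ?thesis by simp
    qed
    finally show ?thesis .
  qed
  have "N + (real (card U) - 1) * N / q = real (card W) * card U + (N - card W) * card U / q"
    using s1 by (simp only: lhs rhs)
  then have "q * (N + (real (card U) - 1) * N / q) = q * (real (card W) * card U + (N - card W) * card U / q)"
    by simp
  then have "q * N + (real (card U) - 1) * N = q * (real (card W) * card U) + (N - card W) * card U"
    using q1 by (simp add: distrib_left)
  then have "(N - real (card W) * card U) * (q - 1) = 0"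
    by (rule alg_aux)
  then have "N - real (card W) * card U = 0" using q1 by simp
  then have "real (card U * card W) = N" unfolding of_nat_mult by (simp add: mult.commute[of "real (card U)"])
  then have "card U * card W = CARD('a) ^ card R" unfolding N_def by (simp only: of_nat_eq_iff)
  then show ?thesis unfolding W_def .
qed


lemma EE_UNIV: "EE UNIV = UNIV" by (auto simp: EE_def)

lemma perp_card:
  fixes V :: "('a::{field,finite} ^ 'n) set"
  assumes "vec.subspace V"
  shows "card V * card (perp V) = CARD('a) ^ CARD('n)"
proof -
  have "perp V = {y\<in>EE UNIV. \<forall>x\<in>V. bil x y = 0}"
    by (auto simp: perp_def EE_UNIV bil_sym)
  then show ?thesis using card_core[OF assms, of UNIV] by (simp add: EE_UNIV)
qed

definition proj :: "'n set \<Rightarrow> 'a::zero ^ 'n \<Rightarrow> 'a ^ 'n" where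
  "proj T x = (\<chi> i. if i \<in> T then 0 else x $ i)"

lemma proj_linear: "Vector_Spaces.linear (*s) (*s) (proj T :: 'a::field ^ 'n \<Rightarrow> _)"
  by unfold_locales (auto simp: proj_def vec_eq_iff)

lemma proj_count:
  fixes V :: "('a::{field,finite} ^ 'n) set"
  assumes sub: "vec.subspace V"
  shows "card {x\<in>V. supp x \<subseteq> T} * card (perp V) = CARD('a) ^ card T * card {y\<in>perp V. supp y \<subseteq> - T}"
proof -
  define U where "U = proj T ` V"
  have subU': "vec.subspace (proj T ` V)"
  proof -
    have a: "proj T (x + y) = proj T x + proj T y" "proj T (c *s x) = c *s proj T x" "proj T 0 = 0"
      for x y :: "'a ^ 'n" and c by (auto simp: proj_def vec_eq_iff)
    show ?thesis unfolding vec.subspace_def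
    proof (intro conjI ballI allI)
      show "0 \<in> proj T ` V" using a(3) sub vec.subspace_0 by (metis image_eqI)
      fix x y assume "x \<in> proj T ` V" "y \<in> proj T ` V"
      then obtain x' y' where "x' \<in> V" "y' \<in> V" "x = proj T x'" "y = proj T y'" by auto
      then show "x + y \<in> proj T ` V" using a(1) sub vec.subspace_add by (metis image_eqI)
    next
      fix c x assume "x \<in> proj T ` V"
      then obtain x' where "x' \<in> V" "x = proj T x'" by auto
      then show "c *s x \<in> proj T ` V" using a(2) sub vec.subspace_scale by (metis image_eqI)
    qed
  qed
  then have subU: "vec.subspace U" unfolding U_def .
  have UE: "U \<subseteq> EE (- T)" unfolding U_def by (auto simp: EE_def proj_def)
  have ker: "{x\<in>V. proj T x = 0} = {x\<in>V. supp x \<subseteq> T}"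
    by (auto simp: proj_def supp_def vec_eq_iff)
  have c1: "card V = card {x\<in>V. supp x \<subseteq> T} * card U"
    unfolding U_def ker[symmetric]
    by (rule card_fiber) (auto intro: vec.subspace_add vec.subspace_diff sub simp: proj_def vec_eq_iff)
  have Weq: "{y\<in>EE (- T). \<forall>x\<in>U. bil x y = 0} = {y\<in>perp V. supp y \<subseteq> - T}"
  proof -
    have h: "bil (proj T x) y = bil y x" if "supp y \<subseteq> - T" for x y :: "'a ^ 'n"
      using that unfolding bil_def proj_def supp_def
      by (intro sum.cong) auto
    have EEs: "y \<in> EE (- T) \<longleftrightarrow> supp y \<subseteq> - T" for y :: "'a ^ 'n"
      by (auto simp: EE_def supp_def)
    show ?thesis
    proof (intro set_eqI iffI)
      fix y assume "y \<in> {y \<in> EE (- T). \<forall>x\<in>U. bil x y = 0}"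
      then show "y \<in> {y \<in> perp V. supp y \<subseteq> - T}"
        using h by (auto simp: U_def perp_def EEs)
    next
      fix y assume "y \<in> {y \<in> perp V. supp y \<subseteq> - T}"
      then show "y \<in> {y \<in> EE (- T). \<forall>x\<in>U. bil x y = 0}"
        using h by (auto simp: U_def perp_def EEs)
    qed
  qed
  have c2: "card U * card {y\<in>perp V. supp y \<subseteq> - T} = CARD('a) ^ card (- T)"
    using card_core[OF subU UE] Weq by simp
  have c3: "card V * card (perp V) = CARD('a) ^ CARD('n)" by (rule perp_card[OF sub])
  have cT: "card (- T) + card T = CARD('n)"
  proof -
    have "card (- T) + card T = card (- T \<union> T)"
      by (rule card_Un_disjoint[symmetric]) auto
    also have "- T \<union> T = UNIV" by auto
    finally show ?thesis by simp
  qed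
  have "card {x\<in>V. supp x \<subseteq> T} * card (perp V) * card U
      = CARD('a) ^ card T * card {y\<in>perp V. supp y \<subseteq> - T} * card U"
  proof -
    have "card {x\<in>V. supp x \<subseteq> T} * card (perp V) * card U = CARD('a) ^ CARD('n)"
      unfolding c3[symmetric] c1 by (simp only: mult_ac)
    also have "\<dots> = CARD('a) ^ card T * CARD('a) ^ card (- T)"
      unfolding cT[symmetric] power_add by (simp only: mult_ac)
    also have "\<dots> = CARD('a) ^ card T * card {y\<in>perp V. supp y \<subseteq> - T} * card U"
      unfolding c2[symmetric] by (simp only: mult_ac)
    finally show ?thesis .
  qed
  moreover have nz: "card U \<noteq> 0"
  proof -
    have "0 \<in> U" using subU vec.subspace_0 by blast
    then have "U \<noteq> {}" by blast
    then show ?thesis by simp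
  qed
  ultimately show ?thesis by (simp only: mult_right_cancel[OF nz])
qed

lemma prod_if_zero:
  assumes "finite A"
  shows "(\<Prod>i\<in>A. if P i then (c::real) else 0) = (if \<forall>i\<in>A. P i then c ^ card A else 0)"
  using assms by (induction A rule: finite_induct) auto

lemma prod_if_zero2:
  assumes "finite A"
  shows "(\<Prod>i\<in>A. if P i then 0 else (c::real)) = (if \<forall>i\<in>A. \<not> P i then c ^ card A else 0)"
  using assms by (induction A rule: finite_induct) auto

lemma IL1:
  assumes fin: "finite S"
  shows "(if X = S then 1 else 0 :: real) = (\<Sum>T\<in>Pow S. (-1) ^ card (S - T) * (if X \<subseteq> T then 1 else 0))"
proof (cases "X \<subseteq> S")
  case True
  have "(\<Prod>i\<in>S. 1 + (if i \<in> X then 0 else -1)) =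
      (\<Sum>T\<in>Pow S. (\<Prod>i\<in>T. 1) * (\<Prod>i\<in>S - T. (if i \<in> X then 0 else (-1::real))))"
    by (rule prod_add[OF fin])
  moreover have "(\<Prod>i\<in>S. 1 + (if i \<in> X then 0 else (-1::real))) = (if X = S then 1 else 0)"
  proof -
    have "(\<Prod>i\<in>S. 1 + (if i \<in> X then 0 else (-1::real))) = (\<Prod>i\<in>S. if i \<in> X then 1 else 0)"
      by (rule prod.cong) auto
    also have "\<dots> = (if X = S then 1 else 0)"
      using True fin by (auto simp: prod_if_zero)
    finally show ?thesis .
  qed
  moreover have "(\<Prod>i\<in>T. 1) * (\<Prod>i\<in>S - T. (if i \<in> X then 0 else (-1::real))) =
      (-1) ^ card (S - T) * (if X \<subseteq> T then 1 else 0)" if "T \<in> Pow S" for T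
  proof -
    have "(\<Prod>i\<in>S - T. (if i \<in> X then 0 else (-1::real))) = (if \<forall>i\<in>S - T. i \<notin> X then (-1) ^ card (S - T) else 0)"
      using fin by (intro prod_if_zero2) auto
    moreover have "(\<forall>i\<in>S - T. i \<notin> X) \<longleftrightarrow> X \<subseteq> T" using True that by auto
    ultimately show ?thesis by (simp add: if_distrib cong: if_cong)
  qed
  ultimately show ?thesis by (metis (no_types, lifting) sum.cong)
next
  case False
  then have "X \<noteq> S" by auto
  moreover have "\<And>T. T \<in> Pow S \<Longrightarrow> \<not> X \<subseteq> T" using False by auto
  ultimately show ?thesis by simp
qed

lemma IL2:
  assumes fin: "finite S"
  shows "(\<Sum>T\<in>Pow S. (-1) ^ card (S - T) * (q::real) ^ card T * (if Y \<inter> T = {} then 1 else 0))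
    = (q - 1) ^ card (S - Y) * (-1) ^ card (S \<inter> Y)"
proof -
  have "(\<Prod>i\<in>S. (if i \<notin> Y then q else 0) + (-1)) =
      (\<Sum>T\<in>Pow S. (\<Prod>i\<in>T. if i \<notin> Y then q else 0) * (\<Prod>i\<in>S - T. (-1::real)))"
    by (rule prod_add[OF fin])
  moreover have "(\<Prod>i\<in>S. (if i \<notin> Y then q else 0) + (-1)) = (q - 1) ^ card (S - Y) * (-1) ^ card (S \<inter> Y)"
  proof -
    have "(\<Prod>i\<in>S. (if i \<notin> Y then q else 0) + (-1)) = (\<Prod>i\<in>S. if i \<notin> Y then q - 1 else -1)"
      by (rule prod.cong) auto
    also have "\<dots> = (\<Prod>i\<in>S \<inter> {i. i \<notin> Y}. q - 1) * (\<Prod>i\<in>S \<inter> - {i. i \<notin> Y}. -1)"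
      by (rule prod.If_cases[OF fin])
    also have "S \<inter> {i. i \<notin> Y} = S - Y" by auto
    also have "S \<inter> - {i. i \<notin> Y} = S \<inter> Y" by auto
    finally show ?thesis by simp
  qed
  moreover have "(\<Prod>i\<in>T. if i \<notin> Y then q else 0) * (\<Prod>i\<in>S - T. (-1::real)) =
      (-1) ^ card (S - T) * q ^ card T * (if Y \<inter> T = {} then 1 else 0)" if "T \<in> Pow S" for T
  proof -
    have fT: "finite T" using that fin finite_subset by auto
    have "(\<Prod>i\<in>T. if i \<notin> Y then q else 0) = (if \<forall>i\<in>T. i \<notin> Y then q ^ card T else 0)"
      by (rule prod_if_zero[OF fT])
    moreover have "(\<forall>i\<in>T. i \<notin> Y) \<longleftrightarrow> Y \<inter> T = {}" by auto
    ultimately show ?thesis by simp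
  qed
  ultimately show ?thesis by (metis (no_types, lifting) sum.cong)
qed

lemma upper_vandermonde:
  "(\<Sum>s\<le>N. (s choose a) * ((N - s) choose b)) = Suc N choose (a + b + 1)"
proof (induction N arbitrary: b)
  case 0
  then show ?case by (cases a; cases b) auto
next
  case (Suc N)
  show ?case
  proof (cases b)
    case 0
    then show ?thesis by (simp add: sum_choose_upper)
  next
    case (Suc b')
    have "(\<Sum>s\<le>Suc N. (s choose a) * ((Suc N - s) choose b))
        = (\<Sum>s\<le>N. (s choose a) * ((Suc N - s) choose b))"
      using Suc by simp
    also have "\<dots> = (\<Sum>s\<le>N. (s choose a) * ((N - s) choose b') + (s choose a) * ((N - s) choose b))"
      by (rule sum.cong) (auto simp: Suc Suc_diff_le algebra_simps)
    also have "\<dots> = (Suc N choose (a + b' + 1)) + (Suc N choose (a + b + 1))"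
      by (simp add: sum.distrib Suc.IH)
    also have "\<dots> = Suc (Suc N) choose (a + b + 1)"
      using Suc by simp
    finally show ?thesis .
  qed
qed

lemma per_term:
  assumes "j \<le> w" "w \<le> n" "m \<le> n - w"
  shows "real (w choose j) * real ((n - w) choose m) / real (n choose (j + m))
       = real ((j + m) choose j) * real ((n - (j + m)) choose (w - j)) / real (n choose w)"
proof -
  have e1: "n - (j + m) - (w - j) = n - w - m" using assms by simp
  have e2: "j + m - j = m" by simp
  show ?thesis
    using assms
    by (simp add: binomial_fact e1 e2 field_simps)
qed

lemma inner_sum:
  assumes jw: "j \<le> w" and wn: "w \<le> n"
  shows "(\<Sum>m\<le>n - w. real (w choose j) * real ((n - w) choose m) / real (n choose (j + m)))
       = real (n + 1) / real (w + 1)"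
proof -
  define G where "G s = (s choose j) * ((n - s) choose (w - j))" for s
  have "(\<Sum>m\<le>n - w. real (w choose j) * real ((n - w) choose m) / real (n choose (j + m)))
      = (\<Sum>m\<le>n - w. real (G (j + m)) / real (n choose w))"
    by (rule sum.cong[OF refl]) (use jw wn in \<open>simp add: per_term G_def\<close>)
  also have "\<dots> = real (\<Sum>m\<le>n - w. G (j + m)) / real (n choose w)"
    by (simp add: sum_divide_distrib)
  also have "(\<Sum>m\<le>n - w. G (j + m)) = (\<Sum>s\<in>(+) j ` {..n - w}. G s)"
    by (simp add: sum.reindex)
  also have "\<dots> = (\<Sum>s\<le>n. G s)"
  proof (rule sum.mono_neutral_left)
    show "(+) j ` {..n - w} \<subseteq> {..n}" using jw wn by auto
    show "\<forall>i\<in>{..n} - (+) j ` {..n - w}. G i = 0"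
    proof
      fix s assume s: "s \<in> {..n} - (+) j ` {..n - w}"
      show "G s = 0"
      proof (cases "s < j")
        case True then show ?thesis by (simp add: G_def)
      next
        case False
        then have "s = j + (s - j)" by simp
        with s have "s - j > n - w" by (metis DiffD2 atMost_iff image_eqI not_le)
        then have "n - s < w - j" using jw wn False s by auto
        then show ?thesis by (simp add: G_def)
      qed
    qed
  qed simp
  also have "\<dots> = Suc n choose (j + (w - j) + 1)"
    unfolding G_def by (rule upper_vandermonde)
  also have "j + (w - j) + 1 = Suc w" using jw by simp
  finally have eq: "(\<Sum>m\<le>n - w. real (w choose j) * real ((n - w) choose m) / real (n choose (j + m)))
      = real (Suc n choose Suc w) / real (n choose w)" .
  have "real (Suc n) * real (n choose w) = real (Suc n choose Suc w) * real (Suc w)"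
    using Suc_times_binomial_eq[of n w] by (metis of_nat_mult)
  moreover have "n choose w > 0" using wn by simp
  ultimately show ?thesis unfolding eq by (simp add: field_simps)
qed

lemma sum_pow_card:
  assumes "finite Y"
  shows "(\<Sum>A\<in>Pow Y. g (card A)) = (\<Sum>j\<le>card Y. real (card Y choose j) * (g j :: real))"
proof -
  have "(\<Sum>A\<in>Pow Y. g (card A)) = (\<Sum>j\<le>card Y. \<Sum>A\<in>{A\<in>Pow Y. card A = j}. g (card A))"
    by (rule sum.group[symmetric]) (use assms in \<open>auto intro: card_mono\<close>)
  also have "\<dots> = (\<Sum>j\<le>card Y. real (card Y choose j) * g j)"
  proof (rule sum.cong[OF refl])
    fix j
    have "{A\<in>Pow Y. card A = j} = {B. B \<subseteq> Y \<and> card B = j}" by auto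
    then have "card {A\<in>Pow Y. card A = j} = card Y choose j" using n_subsets[OF assms] by simp
    then show "(\<Sum>A\<in>{A\<in>Pow Y. card A = j}. g (card A)) = real (card Y choose j) * g j"
      by simp
  qed
  finally show ?thesis .
qed

lemma step7:
  assumes fin: "finite U" and YU: "Y \<subseteq> U"
  shows "(\<Sum>S\<in>Pow U. (r::real) ^ card (S \<inter> Y) / real (card U choose card S))
       = real (card U + 1) / real (card Y + 1) * (\<Sum>j\<le>card Y. r ^ j)"
proof -
  define n where "n = card U"
  define w where "w = card Y"
  have finY: "finite Y" using fin YU finite_subset by auto
  have finUY: "finite (U - Y)" using fin by simp
  have cUY: "card (U - Y) = n - w" unfolding n_def w_def using YU finY by (simp add: card_Diff_subset)
  have wn: "w \<le> n" unfolding n_def w_def using YU fin card_mono by auto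
  have "(\<Sum>S\<in>Pow U. r ^ card (S \<inter> Y) / real (n choose card S))
      = (\<Sum>AB\<in>Pow Y \<times> Pow (U - Y). r ^ card (fst AB) / real (n choose (card (fst AB) + card (snd AB))))"
  proof (rule sum.reindex_bij_witness[where i="\<lambda>(A, B). A \<union> B" and j="\<lambda>S. (S \<inter> Y, S - Y)"])
    fix S assume S: "S \<in> Pow U"
    show "(case (S \<inter> Y, S - Y) of (A, B) \<Rightarrow> A \<union> B) = S" by auto
    show "(S \<inter> Y, S - Y) \<in> Pow Y \<times> Pow (U - Y)" using S by auto
    have fS: "finite S" using S fin finite_subset by auto
    have "card S = card (S \<inter> Y) + card (S - Y)"
      using fS by (metis Int_Diff_disjoint Int_Diff_Un card_Un_disjoint finite_Diff finite_Int)
    then show "r ^ card (fst (S \<inter> Y, S - Y)) / real (n choose (card (fst (S \<inter> Y, S - Y)) + card (snd (S \<inter> Y, S - Y))))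
        = r ^ card (S \<inter> Y) / real (n choose card S)" by simp
  next
    fix AB assume AB: "AB \<in> Pow Y \<times> Pow (U - Y)"
    show "((case AB of (A, B) \<Rightarrow> A \<union> B) \<inter> Y, (case AB of (A, B) \<Rightarrow> A \<union> B) - Y) = AB"
      using AB by auto
    show "(case AB of (A, B) \<Rightarrow> A \<union> B) \<in> Pow U" using AB YU by auto
  qed
  also have "\<dots> = (\<Sum>A\<in>Pow Y. \<Sum>B\<in>Pow (U - Y). r ^ card A / real (n choose (card A + card B)))"
    by (simp add: sum.cartesian_product split_beta)
  also have "\<dots> = (\<Sum>A\<in>Pow Y. \<Sum>m\<le>n - w. real ((n - w) choose m) * (r ^ card A / real (n choose (card A + m))))"
    by (rule sum.cong[OF refl]) (simp add: sum_pow_card[OF finUY, where g="\<lambda>b. r ^ _ / real (n choose (_ + b))"] cUY)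
  also have "\<dots> = (\<Sum>j\<le>w. real (w choose j) * (\<Sum>m\<le>n - w. real ((n - w) choose m) * (r ^ j / real (n choose (j + m)))))"
    unfolding w_def by (rule sum_pow_card[OF finY, where g="\<lambda>a. \<Sum>m\<le>n - card Y. real ((n - card Y) choose m) * (r ^ a / real (n choose (a + m)))"])
  also have "\<dots> = (\<Sum>j\<le>w. r ^ j * (\<Sum>m\<le>n - w. real (w choose j) * real ((n - w) choose m) / real (n choose (j + m))))"
    by (rule sum.cong[OF refl]) (simp add: sum_distrib_left algebra_simps)
  also have "\<dots> = (\<Sum>j\<le>w. r ^ j * (real (n + 1) / real (w + 1)))"
    by (rule sum.cong[OF refl]) (simp add: inner_sum wn)
  also have "\<dots> = real (n + 1) / real (w + 1) * (\<Sum>j\<le>w. r ^ j)"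
    by (simp add: sum_distrib_left sum_divide_distrib mult.commute)
  finally show ?thesis unfolding n_def w_def .
qed


lemma card_filter_real: "finite A \<Longrightarrow> real (card {x\<in>A. P x}) = (\<Sum>x\<in>A. if P x then 1 else 0)"
  by (simp add: sum.inter_filter[symmetric])

lemma sum_by_weight:
  fixes W :: "('a::{zero,finite} ^ 'n) set"
  shows "(\<Sum>k=0..CARD('n). real (card (\<A> k W)) * g k) = (\<Sum>x\<in>W. (g (wt x) :: real))"
proof -
  have "(\<Sum>x\<in>W. g (wt x)) = (\<Sum>k\<in>{0..CARD('n)}. \<Sum>x\<in>{x\<in>W. wt x = k}. g (wt x))"
  proof (rule sum.group[symmetric])
    show "wt ` W \<subseteq> {0..CARD('n)}"
      by (auto simp: wt_def card_mono)
  qed auto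
  also have "\<dots> = (\<Sum>k=0..CARD('n). real (card (\<A> k W)) * g k)"
    by (rule sum.cong[OF refl]) (simp add: weight_class_def)
  finally show ?thesis by simp
qed

lemma c_formula:
  fixes V :: "('a::{field,finite} ^ 'n) set"
  assumes sub: "vec.subspace V"
  shows "real (card {x\<in>V. supp x = S}) * real (card (perp V))
    = (\<Sum>y\<in>perp V. (real CARD('a) - 1) ^ card (S - supp y) * (-1) ^ card (S \<inter> supp y))"
proof -
  define q where "q = real CARD('a)"
  have finS: "finite S" by simp
  have "real (card {x\<in>V. supp x = S}) = (\<Sum>x\<in>V. if supp x = S then 1 else 0)"
    by (simp add: card_filter_real)
  also have "\<dots> = (\<Sum>x\<in>V. \<Sum>T\<in>Pow S. (-1) ^ card (S - T) * (if supp x \<subseteq> T then 1 else 0))"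
    by (rule sum.cong[OF refl]) (rule IL1[OF finS])
  also have "\<dots> = (\<Sum>T\<in>Pow S. \<Sum>x\<in>V. (-1) ^ card (S - T) * (if supp x \<subseteq> T then 1 else 0))"
    by (rule sum.swap)
  also have "\<dots> = (\<Sum>T\<in>Pow S. (-1) ^ card (S - T) * real (card {x\<in>V. supp x \<subseteq> T}))"
    by (rule sum.cong[OF refl]) (simp add: card_filter_real sum_distrib_left)
  finally have c1: "real (card {x\<in>V. supp x = S}) = (\<Sum>T\<in>Pow S. (-1) ^ card (S - T) * real (card {x\<in>V. supp x \<subseteq> T}))" .
  have "real (card {x\<in>V. supp x = S}) * real (card (perp V))
      = (\<Sum>T\<in>Pow S. (-1) ^ card (S - T) * real (card {x\<in>V. supp x \<subseteq> T} * card (perp V)))"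
    unfolding c1 by (simp add: sum_distrib_right mult.assoc)
  also have "\<dots> = (\<Sum>T\<in>Pow S. (-1) ^ card (S - T) * (q ^ card T * real (card {y\<in>perp V. supp y \<subseteq> - T})))"
    by (rule sum.cong[OF refl]) (simp only: proj_count[OF sub] of_nat_mult of_nat_power q_def)
  also have "\<dots> = (\<Sum>T\<in>Pow S. \<Sum>y\<in>perp V. (-1) ^ card (S - T) * q ^ card T * (if supp y \<inter> T = {} then 1 else 0))"
  proof (rule sum.cong[OF refl])
    fix T
    have "{y\<in>perp V. supp y \<subseteq> - T} = {y\<in>perp V. supp y \<inter> T = {}}" by auto
    then show "(-1) ^ card (S - T) * (q ^ card T * real (card {y\<in>perp V. supp y \<subseteq> - T}))
        = (\<Sum>y\<in>perp V. (-1) ^ card (S - T) * q ^ card T * (if supp y \<inter> T = {} then 1 else 0))"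
      by (simp add: card_filter_real sum_distrib_left mult.assoc)
  qed
  also have "\<dots> = (\<Sum>y\<in>perp V. \<Sum>T\<in>Pow S. (-1) ^ card (S - T) * q ^ card T * (if supp y \<inter> T = {} then 1 else 0))"
    by (rule sum.swap)
  also have "\<dots> = (\<Sum>y\<in>perp V. (q - 1) ^ card (S - supp y) * (-1) ^ card (S \<inter> supp y))"
    by (rule sum.cong[OF refl]) (rule IL2[OF finS])
  finally show ?thesis unfolding q_def .
qed


lemma geo_aux: "q - 1 \<noteq> 0 \<Longrightarrow> (q::real) > 1 \<Longrightarrow> (X - 1) / (- q / (q - 1)) = (q - 1) / q * (1 - X)"
  by (simp add: field_simps)

lemma fin_aux: "(q::real) > 1 \<Longrightarrow> p > 0 \<Longrightarrow>
   B * (real (n + 1) / real (k + 1) * ((q - 1) / q * (1 - Z))) / p = real (n + 1) * (q - 1) / (q * p) * (B / real (k + 1) * (1 - Z))"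
  by (simp add: field_simps)

theorem corollary1:
  fixes V :: "('a::{field,finite} ^ 'n) set"
  assumes "vec.subspace V"
  shows "(\<Sum>k=0..CARD('n). real (card (\<A> k V)) /
            ((real CARD('a) - 1) ^ k * real (CARD('n) choose k)))
       = real (CARD('n) + 1) * (real CARD('a) - 1) / real CARD('a) ^ (1 + CARD('n) - vec.dim V)
         * (\<Sum>k=0..CARD('n). real (card (\<A> k (perp V))) / real (k + 1)
              * (1 - (-1) ^ (k + 1) / (real CARD('a) - 1) ^ (k + 1)))"
proof -
  note sub = assms
  define q where "q = real CARD('a)"
  define n where "n = CARD('n)"
  define p where "p = real (card (perp V))"
  define r where "r = -1 / (q - 1)"
  define h where "h k = 1 / ((q - 1) ^ k * real (n choose k))" for k
  define \<Psi> where "\<Psi> w = real (n + 1) / real (w + 1) * ((q - 1) / q * (1 - (-1) ^ (w + 1) / (q - 1) ^ (w + 1)))" for w :: nat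
  have q1: "q > 1" unfolding q_def using card_field_gt1[where 'a='a] by simp
  have qm1: "q - 1 \<noteq> 0" using q1 by simp
  have p_pos: "p > 0"
  proof -
    have "(0::'a ^ 'n) \<in> perp V" by (simp add: perp_def bil_def)
    then have "perp V \<noteq> {}" by blast
    then show ?thesis unfolding p_def by (simp add: card_gt_0_iff)
  qed
  have L1: "(\<Sum>k=0..CARD('n). real (card (\<A> k V)) / ((real CARD('a) - 1) ^ k * real (CARD('n) choose k)))
      = (\<Sum>x\<in>V. h (wt x))"
  proof -
    have "(\<Sum>k=0..CARD('n). real (card (\<A> k V)) / ((real CARD('a) - 1) ^ k * real (CARD('n) choose k)))
        = (\<Sum>k=0..CARD('n). real (card (\<A> k V)) * h k)"
      by (rule sum.cong[OF refl]) (simp add: h_def q_def n_def)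
    also have "\<dots> = (\<Sum>x\<in>V. h (wt x))" by (rule sum_by_weight)
    finally show ?thesis .
  qed
  have L2: "(\<Sum>x\<in>V. h (wt x)) = (\<Sum>S\<in>Pow UNIV. real (card {x\<in>V. supp x = S}) * h (card S))"
  proof -
    have "(\<Sum>x\<in>V. h (wt x)) = (\<Sum>S\<in>Pow UNIV. \<Sum>x\<in>{x\<in>V. supp x = S}. h (wt x))"
      by (rule sum.group[symmetric]) auto
    also have "\<dots> = (\<Sum>S\<in>Pow UNIV. real (card {x\<in>V. supp x = S}) * h (card S))"
      by (rule sum.cong[OF refl]) (simp add: wt_def supp_def)
    finally show ?thesis .
  qed
  have pt: "(q - 1) ^ card (S - Y) * (-1) ^ card (S \<inter> Y) * h (card S) = r ^ card (S \<inter> Y) / real (n choose card S)"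
    for S Y :: "'n set"
  proof -
    have cS: "card S = card (S - Y) + card (S \<inter> Y)"
      by (metis Int_Diff_disjoint Int_Diff_Un card_Un_disjoint finite Un_commute Int_commute)
    have "card S \<le> CARD('n)" by (rule card_mono) auto
    then have Cnz: "real (n choose card S) \<noteq> 0" unfolding n_def by simp
    show ?thesis unfolding h_def r_def cS power_add power_divide
      using qm1 Cnz by (simp add: field_simps)
  qed
  have L3: "p * (\<Sum>S\<in>Pow UNIV. real (card {x\<in>V. supp x = S}) * h (card S))
      = (\<Sum>y\<in>perp V. \<Sum>S\<in>Pow UNIV. r ^ card (S \<inter> supp y) / real (n choose card S))"
  proof -
    have "p * (\<Sum>S\<in>Pow UNIV. real (card {x\<in>V. supp x = S}) * h (card S))
        = (\<Sum>S\<in>Pow UNIV. (real (card {x\<in>V. supp x = S}) * p) * h (card S))"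
      by (simp add: sum_distrib_left algebra_simps)
    also have "\<dots> = (\<Sum>S\<in>Pow UNIV. (\<Sum>y\<in>perp V. (q - 1) ^ card (S - supp y) * (-1) ^ card (S \<inter> supp y)) * h (card S))"
      unfolding p_def q_def c_formula[OF sub] ..
    also have "\<dots> = (\<Sum>S\<in>Pow UNIV. \<Sum>y\<in>perp V. (q - 1) ^ card (S - supp y) * (-1) ^ card (S \<inter> supp y) * h (card S))"
      by (simp add: sum_distrib_right)
    also have "\<dots> = (\<Sum>y\<in>perp V. \<Sum>S\<in>Pow UNIV. (q - 1) ^ card (S - supp y) * (-1) ^ card (S \<inter> supp y) * h (card S))"
      by (rule sum.swap)
    also have "\<dots> = (\<Sum>y\<in>perp V. \<Sum>S\<in>Pow UNIV. r ^ card (S \<inter> supp y) / real (n choose card S))"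
      by (simp only: pt)
    finally show ?thesis .
  qed
  have L5: "(\<Sum>j\<le>w. r ^ j) = (q - 1) / q * (1 - (-1) ^ (w + 1) / (q - 1) ^ (w + 1))" for w
  proof -
    have rp: "1 / (q - 1) > 0" using q1 by simp
    have "r = - (1 / (q - 1))" unfolding r_def by simp
    then have r1: "r \<noteq> 1" using rp by linarith
    have "(\<Sum>j\<le>w. r ^ j) = (\<Sum>j<Suc w. r ^ j)" by (simp add: lessThan_Suc_atMost)
    also have "\<dots> = (r ^ Suc w - 1) / (r - 1)" by (rule geometric_sum[OF r1])
    also have "\<dots> = (q - 1) / q * (1 - (-1) ^ (w + 1) / (q - 1) ^ (w + 1))"
    proof -
      have "r - 1 = - q / (q - 1)" unfolding r_def using qm1 by (simp add: field_simps)
      moreover have "r ^ Suc w = (-1) ^ (w + 1) / (q - 1) ^ (w + 1)" unfolding r_def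
        by (simp only: power_divide Suc_eq_plus1)
      ultimately have "(r ^ Suc w - 1) / (r - 1) = ((-1) ^ (w + 1) / (q - 1) ^ (w + 1) - 1) / (- q / (q - 1))"
        by simp
      also have "\<dots> = (q - 1) / q * (1 - (-1) ^ (w + 1) / (q - 1) ^ (w + 1))"
        using qm1 q1 by (rule_tac geo_aux) auto
      finally show ?thesis .
    qed
    finally show ?thesis .
  qed
  have L4: "(\<Sum>S\<in>Pow UNIV. r ^ card (S \<inter> supp y) / real (n choose card S)) = \<Psi> (wt y)" for y :: "'a ^ 'n"
  proof -
    have "(\<Sum>S\<in>Pow UNIV. r ^ card (S \<inter> supp y) / real (card (UNIV :: 'n set) choose card S))
        = real (card (UNIV :: 'n set) + 1) / real (card (supp y) + 1) * (\<Sum>j\<le>card (supp y). r ^ j)"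
      by (rule step7) auto
    then show ?thesis unfolding \<Psi>_def L5 n_def by (simp add: wt_def supp_def)
  qed
  have main: "p * (\<Sum>k=0..CARD('n). real (card (\<A> k V)) / ((real CARD('a) - 1) ^ k * real (CARD('n) choose k)))
      = (\<Sum>k=0..CARD('n). real (card (\<A> k (perp V))) * \<Psi> k)"
    unfolding L1 L2 L3 L4 by (rule sum_by_weight[symmetric])
  have pdim: "p = q ^ (n - vec.dim V)"
  proof -
    have "card V * card (perp V) = CARD('a) ^ CARD('n)" by (rule perp_card[OF sub])
    moreover have "card V = CARD('a) ^ vec.dim V" by (rule card_dim[OF sub])
    moreover have "vec.dim V \<le> CARD('n)" by (rule dim_subset_UNIV_cart_gen)
    ultimately have "CARD('a) ^ vec.dim V * card (perp V) = CARD('a) ^ vec.dim V * CARD('a) ^ (CARD('n) - vec.dim V)"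
      by (simp add: power_add[symmetric])
    then have "card (perp V) = CARD('a) ^ (CARD('n) - vec.dim V)" by simp
    then show ?thesis unfolding p_def q_def n_def by simp
  qed
  have dn: "vec.dim V \<le> n" unfolding n_def by (rule dim_subset_UNIV_cart_gen)
  have qpow: "real CARD('a) ^ (1 + CARD('n) - vec.dim V) = q * p"
    unfolding pdim q_def[symmetric] n_def[symmetric] using dn by (simp add: Suc_diff_le)
  have "(\<Sum>k=0..CARD('n). real (card (\<A> k V)) / ((real CARD('a) - 1) ^ k * real (CARD('n) choose k)))
      = (\<Sum>k=0..CARD('n). real (card (\<A> k (perp V))) * \<Psi> k) / p"
    using main p_pos by (simp add: field_simps)
  also have "\<dots> = real (CARD('n) + 1) * (real CARD('a) - 1) / real CARD('a) ^ (1 + CARD('n) - vec.dim V)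
         * (\<Sum>k=0..CARD('n). real (card (\<A> k (perp V))) / real (k + 1)
              * (1 - (-1) ^ (k + 1) / (real CARD('a) - 1) ^ (k + 1)))"
  proof -
    have qpow2: "q ^ (1 + n - vec.dim V) = q * p" using qpow unfolding q_def n_def .
    show ?thesis
      unfolding q_def[symmetric] n_def[symmetric] qpow2 sum_distrib_left sum_divide_distrib
      by (rule sum.cong[OF refl]) (use q1 p_pos in \<open>simp only: \<Psi>_def, rule fin_aux\<close>)
  qed
  finally show ?thesis .
qed

end
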